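(* Let $q$ be odd, $\alpha,\beta\in\mathbb{F}_{q^2}$ with $\alpha\ne0$ and $(\beta^q-\beta)^2+4\alpha^{q+1}$ a nonsquare in $\mathbb{F}_q$, let $R_1=(0,\epsilon,1)$, $U_\infty=(1,0,0)$, and let $\ell$ be a line of $\mathrm{PG}(2,q^2)$ through $U_\infty$. (1) If $\alpha$ is a nonsquare in $\mathbb{F}_{q^2}$, then $|\ell\cap\mathrm{pedal}(R_1)|\in\{0,2\}$. (2) If $\alpha$ is a nonzero square in $\mathbb{F}_{q^2}$, then $|\ell\cap\mathrm{pedal}(R_1)|\in\{0,2,4\}$. Further, there exist at least $\frac{q-3}{4}$ lines meeting $\mathrm{pedal}(R_1)$ in exactly $4$ points, and every such line passes through $U_\infty$.
   Context: Points of $\mathrm{PG}(2,q^2)$ have homogeneous coordinates $(x,y,z)$. $\zeta$ is a primitive element of $\mathbb{F}_{q^2}$ and $\epsilon=\zeta^{(q+1)/2}$. $\mathcal U_{\alpha\beta}=\{(x,\alpha x^2+\beta x^{q+1}+r,1): x\in\mathbb{F}_{q^2}, r\in\mathbb{F}_q\}\cup\{(0,1,0)\}$, which under the hypotheses is a unital (a set of $q^3+1$ points meeting every line in $1$ or $q+1$ points), and $R_1\notin\mathcal U_{\alpha\beta}$. For a point $P$ not on the unital, $\mathrm{pedal}(P)$ is the set of points of contact of the $q+1$ tangent lines (lines meeting the unital in exactly one point) through $P$. *)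

theory Defs
  imports Complex_Main
begin

definition smul3 :: "'a::field \<Rightarrow> 'a \<times> 'a \<times> 'a \<Rightarrow> 'a \<times> 'a \<times> 'a" where
  "smul3 c v = (case v of (x, y, z) \<Rightarrow> (c * x, c * y, c * z))"

definition pt :: "'a::field \<times> 'a \<times> 'a \<Rightarrow> ('a \<times> 'a \<times> 'a) set" where
  "pt v = {smul3 c v | c. c \<noteq> 0}"

definition pg_points :: "('a::field \<times> 'a \<times> 'a) set set" where
  "pg_points = {pt v | v. v \<noteq> (0, 0, 0)}"

definition line_of :: "'a::field \<times> 'a \<times> 'a \<Rightarrow> ('a \<times> 'a \<times> 'a) set set" where
  "line_of w = (case w of (a, b, c) \<Rightarrow>
     {pt (x, y, z) | x y z. (x, y, z) \<noteq> (0, 0, 0) \<and> a * x + b * y + c * z = 0})"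

definition pg_lines :: "('a::field \<times> 'a \<times> 'a) set set set" where
  "pg_lines = {line_of w | w. w \<noteq> (0, 0, 0)}"

definition subfield_q :: "nat \<Rightarrow> 'a::field set" where
  "subfield_q q = {x. x ^ q = x}"

definition primitive_elem :: "'a::field \<Rightarrow> bool" where
  "primitive_elem z \<longleftrightarrow> (\<forall>x. x \<noteq> 0 \<longrightarrow> (\<exists>k::nat. x = z ^ k))"

definition is_square :: "'a::field \<Rightarrow> bool" where
  "is_square a \<longleftrightarrow> (\<exists>y. y ^ 2 = a)"

definition nonsquare_in_Fq :: "nat \<Rightarrow> 'a::field \<Rightarrow> bool" where
  "nonsquare_in_Fq q d \<longleftrightarrow> d \<in> subfield_q q \<and> \<not> (\<exists>y \<in> subfield_q q. y ^ 2 = d)"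

definition unital_ab :: "nat \<Rightarrow> 'a::field \<Rightarrow> 'a \<Rightarrow> ('a \<times> 'a \<times> 'a) set set" where
  "unital_ab q \<alpha> \<beta> =
     {pt (x, \<alpha> * x ^ 2 + \<beta> * x ^ (q + 1) + r, 1) | x r. r \<in> subfield_q q} \<union> {pt (0, 1, 0)}"

definition tangent_line :: "('a::field \<times> 'a \<times> 'a) set set \<Rightarrow> ('a \<times> 'a \<times> 'a) set set \<Rightarrow> bool" where
  "tangent_line U L \<longleftrightarrow> L \<in> pg_lines \<and> card (L \<inter> U) = 1"

definition pedal :: "('a::field \<times> 'a \<times> 'a) set set \<Rightarrow> ('a \<times> 'a \<times> 'a) set \<Rightarrow> ('a \<times> 'a \<times> 'a) set set" where
  "pedal U P = {Q. \<exists>L. tangent_line U L \<and> P \<in> L \<and> L \<inter> U = {Q}}"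

end

theory Submission
  imports Defs "HOL-Computational_Algebra.Primes" "HOL-Computational_Algebra.Polynomial" "HOL-Number_Theory.Cong"
begin

lemma fin_pow_card:
  fixes x :: "'a::{field,finite}"
  shows "x ^ card (UNIV::'a set) = x"
proof (cases "x = 0")
  case True
  have "card (UNIV::'a set) > 0" by (simp add: card_gt_0_iff)
  then show ?thesis using True by (simp add: power_0_left)
next
  case False
  let ?U = "UNIV - {0::'a}"
  have bij: "bij_betw (\<lambda>y. x * y) ?U ?U"
    unfolding bij_betw_def
  proof (intro conjI)
    show "inj_on ((*) x) (UNIV - {0})" using False by (auto simp: inj_on_def)
    show "(*) x ` (UNIV - {0}) = UNIV - {0}"
    proof
      show "(*) x ` (UNIV - {0}) \<subseteq> UNIV - {0}" using False by auto
      show "UNIV - {0} \<subseteq> (*) x ` (UNIV - {0})"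
      proof
        fix y :: 'a assume "y \<in> UNIV - {0}"
        then show "y \<in> (*) x ` (UNIV - {0})" using False
          by (intro image_eqI[of _ _ "inverse x * y"]) (auto simp: field_simps)
      qed
    qed
  qed
  have "prod (\<lambda>y. y) ?U = prod (\<lambda>y. x * y) ?U"
    using prod.reindex_bij_betw[OF bij, of "\<lambda>y. y"] by simp
  also have "\<dots> = x ^ card ?U * prod (\<lambda>y. y) ?U"
    by (simp add: prod.distrib)
  finally have "x ^ card ?U = 1"
    by (metis (no_types, lifting) DiffD2 finite mult_cancel_right1 prod_zero_iff singletonI)
  moreover have "card ?U + 1 = card (UNIV::'a set)"
    using card_Diff_singleton[of 0 "UNIV::'a set"] by (simp add: card_gt_0_iff)
  ultimately show ?thesis by (metis power_add power_one_right mult_1)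
qed

definition addsub :: "'a::field set \<Rightarrow> bool" where
  "addsub V \<longleftrightarrow> 0 \<in> V \<and> (\<forall>x\<in>V. \<forall>y\<in>V. x + y \<in> V) \<and> (\<forall>x\<in>V. - x \<in> V)"

lemma addsub_nat:
  assumes "addsub V" "x \<in> V" shows "of_nat k * x \<in> V"
  using assms by (induction k) (auto simp: addsub_def algebra_simps)

lemma card_prime_power_aux:
  fixes V :: "'a::{field,finite} set"
  assumes "addsub V" "card V = CHAR('a) ^ j"
  shows "\<exists>n. card (UNIV::'a set) = CHAR('a) ^ n"
  using assms
proof (induction "card (UNIV::'a set) - card V" arbitrary: V j rule: less_induct)
  case less
  let ?p = "CHAR('a)"
  have pp: "prime ?p" by (simp add: finite_imp_CHAR_pos prime_CHAR_semidom)
  show ?case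
  proof (cases "V = UNIV")
    case True then show ?thesis using less by metis
  next
    case False
    then obtain x where x: "x \<notin> V" by auto
    define W where "W = (\<lambda>(v,k). v + of_nat k * x) ` (V \<times> {..<?p})"
    have Wc: "W = {v + of_nat k * x | v k. v \<in> V}"
    proof
      show "W \<subseteq> {v + of_nat k * x | v k. v \<in> V}" unfolding W_def by auto
      show "{v + of_nat k * x | v k. v \<in> V} \<subseteq> W"
      proof clarify
        fix v k assume "v \<in> V"
        have "(of_nat k :: 'a) = of_nat (k mod ?p)"
          by (simp add: of_nat_eq_iff_cong_CHAR cong_def)
        moreover have "k mod ?p < ?p" using pp by (simp add: prime_gt_0_nat)
        ultimately show "v + of_nat k * x \<in> W" unfolding W_def using \<open>v \<in> V\<close>
          by (intro image_eqI[of _ _ "(v, k mod ?p)"]) auto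
      qed
    qed
    have negk: "- (of_nat k * x) = of_nat ((?p - 1) * k) * (x::'a)" for k
    proof -
      have "(of_nat ((?p - 1) * k) :: 'a) = (of_nat ?p - 1) * of_nat k"
        using pp by (simp only: of_nat_mult of_nat_diff[OF prime_ge_1_nat[OF pp]] of_nat_CHAR of_nat_1)
      then show ?thesis by simp
    qed
    have sub: "addsub W" unfolding Wc addsub_def
    proof (intro conjI ballI)
      show "0 \<in> {v + of_nat k * x | v k. v \<in> V}" using less(2)
        by (auto simp: addsub_def intro!: exI[of _ 0])
    next
      fix a b assume "a \<in> {v + of_nat k * x | v k. v \<in> V}" "b \<in> {v + of_nat k * x | v k. v \<in> V}"
      then obtain v k v' k' where "a = v + of_nat k * x" "b = v' + of_nat k' * x" "v \<in> V" "v' \<in> V" by auto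
      then show "a + b \<in> {v + of_nat k * x | v k. v \<in> V}" using less(2)
        by (auto simp: addsub_def algebra_simps intro!: exI[of _ "v + v'"] exI[of _ "k + k'"])
    next
      fix a assume "a \<in> {v + of_nat k * x | v k. v \<in> V}"
      then obtain v k where "a = v + of_nat k * x" "v \<in> V" by auto
      then show "- a \<in> {v + of_nat k * x | v k. v \<in> V}" using less(2) negk[of k]
        by (auto simp: addsub_def intro!: exI[of _ "- v"] exI[of _ "(?p - 1) * k"])
    qed
    have inj: "inj_on (\<lambda>(v,k). v + of_nat k * x) (V \<times> {..<?p})"
    proof (rule inj_onI, clarify)
      fix v k v' k' assume v: "v \<in> V" "v' \<in> V" and k: "k < ?p" "k' < ?p"
        and eq: "v + of_nat k * x = v' + of_nat k' * x"
      have main: "k = k'" if "v + of_nat k * x = v' + of_nat k' * x" "k' \<le> k" "v \<in> V" "v' \<in> V" "k < ?p" "k' < ?p" for v v' k k'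
      proof (rule ccontr)
        assume "k \<noteq> k'"
        define d where "d = k - k'"
        have d: "0 < d" "d < ?p" using that \<open>k \<noteq> k'\<close> unfolding d_def by auto
        have "of_nat d * x = v' - v" using that(1,2) unfolding d_def
          by (simp add: of_nat_diff algebra_simps)
        also have "\<dots> \<in> V" using less(2) that(3,4) unfolding addsub_def
          by (metis diff_conv_add_uminus)
        finally have dx: "of_nat d * x \<in> V" .
        have "coprime d ?p" using d pp
          by (metis coprime_commute nat_dvd_not_less prime_imp_coprime)
        then obtain e where e: "[d * e = 1] (mod ?p)" using cong_solve_coprime_nat by auto
        have "(of_nat (d * e) :: 'a) = 1" using e
          by (metis of_nat_1 of_nat_eq_iff_cong_CHAR)
        then have "of_nat e * (of_nat d * x) = x"
          by (metis mult.assoc mult.commute mult_1 of_nat_mult)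
        with addsub_nat[OF less(2) dx, of e] x show False by simp
      qed
      show "v = v' \<and> k = k'"
      proof (cases "k' \<le> k")
        case True
        with main[OF eq True v k] eq show ?thesis by simp
      next
        case False
        with main[OF eq[symmetric] _ v(2,1) k(2,1)] eq show ?thesis by simp
      qed
    qed
    have cW: "card W = CHAR('a) ^ Suc j"
      unfolding W_def using card_image[OF inj] less(3) by (simp add: card_cartesian_product)
    have "V \<subset> W"
    proof -
      have "V \<subseteq> W" unfolding Wc by (force intro: exI[of _ 0])
      moreover have "x \<in> W" unfolding Wc using less(2)
        by (auto simp: addsub_def intro!: exI[of _ "0::'a"] exI[of _ "1::nat"])
      ultimately show ?thesis using x by auto
    qed
    then have "card V < card W" by (simp add: psubset_card_mono)
    moreover have "card W \<le> card (UNIV::'a set)" by (simp add: card_mono)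
    ultimately show ?thesis using less(1)[OF _ sub cW] by auto
  qed
qed

lemma card_prime_power:
  "\<exists>n. card (UNIV::'a::{field,finite} set) = CHAR('a) ^ n"
  by (rule card_prime_power_aux[of "{0}" 0]) (auto simp: addsub_def)

locale US =
  fixes q :: nat and \<alpha> \<beta> \<zeta> :: "'a::{field,finite}"
  assumes card: "card (UNIV :: 'a set) = q ^ 2"
    and oddq: "odd q"
    and prim: "primitive_elem \<zeta>"
    and a0: "\<alpha> \<noteq> 0"
    and ns: "nonsquare_in_Fq q ((\<beta> ^ q - \<beta>) ^ 2 + 4 * \<alpha> ^ (q + 1))"
begin

lemma q_ge: "q \<ge> 3"
proof -
  have "card (UNIV :: 'a set) \<ge> 2"
  proof -
    have "{0::'a, 1} \<subseteq> UNIV" by simp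
    then have "card {0::'a,1} \<le> card (UNIV::'a set)" by (rule card_mono[OF finite])
    then show ?thesis by simp
  qed
  moreover have "q \<noteq> 0" using card \<open>card (UNIV :: 'a set) \<ge> 2\<close> by (intro notI) simp
  ultimately have "q \<noteq> 1" "q \<noteq> 0" using card by (auto simp: power2_eq_square)
  with oddq show ?thesis by presburger
qed

lemma q_pow: "\<exists>m. q = CHAR('a) ^ m"
proof -
  have pp: "prime CHAR('a)" by (simp add: finite_imp_CHAR_pos prime_CHAR_semidom)
  obtain n where "q ^ 2 = CHAR('a) ^ n" using card_prime_power card by metis
  then have "q dvd CHAR('a) ^ n" by (metis dvd_triv_left power2_eq_square)
  then show ?thesis using divides_primepow_nat[OF pp] by blast
qed

lemma frob_add: "(x + y) ^ q = x ^ q + (y::'a) ^ q"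
proof -
  have pp: "prime CHAR('a)" by (simp add: finite_imp_CHAR_pos prime_CHAR_semidom)
  obtain m where "q = CHAR('a) ^ m" using q_pow by blast
  then show ?thesis using freshmans_dream'[OF pp] by blast
qed

lemma pow_q2: "(x::'a) ^ (q * q) = x"
  using fin_pow_card[of x] card by (simp add: power2_eq_square)

definition cj :: "'a \<Rightarrow> 'a" where "cj x = x ^ q"

lemma cj_add[simp]: "cj (x + y) = cj x + cj y" by (simp add: cj_def frob_add)
lemma cj_mult[simp]: "cj (x * y) = cj x * cj y" by (simp add: cj_def power_mult_distrib)
lemma cj_minus[simp]: "cj (- x) = - cj x" using oddq by (simp add: cj_def)
lemma cj_diff[simp]: "cj (x - y) = cj x - cj y"
  by (metis cj_add cj_minus diff_conv_add_uminus)
lemma cj_cj[simp]: "cj (cj x) = x" by (simp add: cj_def flip: power_mult) (metis pow_q2 mult.commute)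
lemma cj_0[simp]: "cj 0 = 0" using q_ge by (simp add: cj_def)
lemma cj_1[simp]: "cj 1 = 1" by (simp add: cj_def)
lemma cj_power[simp]: "cj (x ^ n) = cj x ^ n" by (simp add: cj_def flip: power_mult) (simp add: mult.commute power_mult)
lemma cj_inverse[simp]: "cj (inverse x) = inverse (cj x)" by (simp add: cj_def power_inverse)
lemma cj_divide[simp]: "cj (x / y) = cj x / cj y" by (simp add: divide_inverse)
lemma cj_of_nat[simp]: "cj (of_nat n) = of_nat n" by (induction n) auto
lemma cj_numeral[simp]: "cj (numeral n) = numeral n"
  by (metis cj_of_nat of_nat_numeral)
lemma cj_eq_iff[simp]: "cj x = cj y \<longleftrightarrow> x = y" by (metis cj_cj)
lemma cj_eq0[simp]: "cj x = 0 \<longleftrightarrow> x = 0" by (metis cj_0 cj_cj)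
lemma pow_Suc_q: "x ^ (q + 1) = x * cj x" by (simp add: cj_def)

lemma two_ne0[simp]: "(2::'a) \<noteq> 0"
proof
  assume "(2::'a) = 0"
  then have "CHAR('a) dvd 2" by (metis of_nat_eq_0_iff_char_dvd of_nat_numeral)
  moreover have "prime CHAR('a)" by (simp add: finite_imp_CHAR_pos prime_CHAR_semidom)
  ultimately have c2: "CHAR('a) = 2" using primes_dvd_imp_eq two_is_prime_nat by blast
  obtain n where "card (UNIV::'a set) = 2 ^ n" using card_prime_power c2 by metis
  then have "q * q = 2 ^ n" using card by (simp add: power2_eq_square)
  moreover have "n \<noteq> 0" using q_ge \<open>q * q = 2 ^ n\<close> by (intro notI) (simp add: mult_eq_1_iff)
  ultimately have "2 dvd q * q" by (metis dvd_power dvd_refl gr0I)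
  then show False using oddq by simp
qed

lemma four_ne0[simp]: "(4::'a) \<noteq> 0"
  using two_ne0 by (metis mult_eq_0_iff numeral_Bit0 mult_2 numeral_times_numeral semiring_norm(12) mult_2_right)

end

context US
begin

abbreviation "NN \<equiv> q * q - 1"

lemma zeta_ne0: "\<zeta> \<noteq> 0"
proof
  assume z: "\<zeta> = 0"
  obtain k where k: "(-1::'a) = \<zeta> ^ k" using prim unfolding primitive_elem_def by fastforce
  have m1: "(-1::'a) \<noteq> 1" using two_ne0 by (metis add_eq_0_iff_both_eq_0 eq_neg_iff_add_eq_0 one_add_one zero_neq_one)
  show False
  proof (cases k)
    case 0 then show False using k m1 by simp
  next
    case (Suc n) then show False using k z by simp
  qed
qed

lemma qq_ge: "q * q \<ge> 9" using mult_le_mono[OF q_ge q_ge] by simp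

lemma NN_pos: "NN > 0" using qq_ge by simp

lemma NN_even: "even NN" using oddq q_ge by simp

lemma NN2_pos: "0 < NN div 2" using NN_pos NN_even by (elim evenE) simp

lemma pow_NN: "x \<noteq> 0 \<Longrightarrow> (x::'a) ^ NN = 1"
proof -
  assume x: "x \<noteq> 0"
  have "NN + 1 = q * q" using qq_ge by simp
  then have "x ^ (NN + 1) = x ^ 1" using pow_q2[of x] by (simp only: power_one_right)
  then have "x ^ NN * x = 1 * x" by (simp only: power_add) simp
  then show ?thesis using x by simp
qed

lemma zeta_order: assumes "\<zeta> ^ k = 1" shows "NN dvd k"
proof (rule ccontr)
  assume nd: "\<not> NN dvd k"
  define r where "r = k mod NN"
  have r: "0 < r" "r < NN" using nd NN_pos unfolding r_def by (auto simp: dvd_eq_mod_eq_0)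
  have "\<zeta> ^ k = \<zeta> ^ (NN * (k div NN) + r)" by (simp add: r_def)
  also have "\<dots> = (\<zeta> ^ NN) ^ (k div NN) * \<zeta> ^ r" by (simp only: power_add power_mult)
  finally have "\<zeta> ^ k = (\<zeta> ^ NN) ^ (k div NN) * \<zeta> ^ r" .
  then have zr: "\<zeta> ^ r = 1" using assms pow_NN[OF zeta_ne0] by simp
  have "UNIV - {0} \<subseteq> (\<lambda>j. \<zeta> ^ j) ` {..<r}"
  proof
    fix x :: 'a assume "x \<in> UNIV - {0}"
    then obtain k' where xk: "x = \<zeta> ^ k'" using prim unfolding primitive_elem_def by auto
    have "x = \<zeta> ^ (r * (k' div r) + k' mod r)" using xk by simp
    also have "\<dots> = (\<zeta> ^ r) ^ (k' div r) * \<zeta> ^ (k' mod r)"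
      by (simp only: power_add power_mult)
    also have "\<dots> = \<zeta> ^ (k' mod r)" using zr by simp
    finally have "x = \<zeta> ^ (k' mod r)" .
    then show "x \<in> (\<lambda>j. \<zeta> ^ j) ` {..<r}" using r by auto
  qed
  then have "card (UNIV - {0::'a}) \<le> card ((\<lambda>j. \<zeta> ^ j) ` {..<r})" by (intro card_mono) auto
  also have "\<dots> \<le> r" using card_image_le[of "{..<r}"] by simp
  finally have "card (UNIV - {0::'a}) \<le> r" .
  moreover have "card (UNIV - {0::'a}) = NN" using card by (simp add: card_Diff_singleton power2_eq_square)
  ultimately show False using r by simp
qed

lemma NN2: "NN div 2 * 2 = NN" using NN_even by simp

lemma zeta_half: "\<zeta> ^ (NN div 2) = -1"
proof -
  have "(\<zeta> ^ (NN div 2)) ^ 2 = \<zeta> ^ NN" by (simp only: power_mult[symmetric] NN2)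
  then have "(\<zeta> ^ (NN div 2)) ^ 2 = 1" using pow_NN[OF zeta_ne0] by simp
  then have "\<zeta> ^ (NN div 2) = 1 \<or> \<zeta> ^ (NN div 2) = -1" by (simp add: power2_eq_1_iff)
  moreover have "\<zeta> ^ (NN div 2) \<noteq> 1"
  proof
    assume "\<zeta> ^ (NN div 2) = 1"
    then have "NN dvd NN div 2" by (rule zeta_order)
    then have "NN \<le> NN div 2" using NN2_pos by (rule dvd_imp_le)
    then show False using NN2 NN2_pos by linarith
  qed
  ultimately show ?thesis by blast
qed

lemma half_pm: "x \<noteq> 0 \<Longrightarrow> (x::'a) ^ (NN div 2) = 1 \<or> x ^ (NN div 2) = -1"
proof -
  assume "x \<noteq> 0"
  have "(x ^ (NN div 2)) ^ 2 = x ^ NN" by (simp only: power_mult[symmetric] NN2)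
  then have "(x ^ (NN div 2)) ^ 2 = 1" using pow_NN \<open>x \<noteq> 0\<close> by simp
  then show ?thesis by (simp add: power2_eq_1_iff)
qed

lemma sq_iff: assumes "x \<noteq> 0" shows "is_square x \<longleftrightarrow> (x::'a) ^ (NN div 2) = 1"
proof
  assume "is_square x"
  then obtain y where y: "y ^ 2 = x" unfolding Defs.is_square_def by auto
  then have "y \<noteq> 0" using assms by auto
  have "x ^ (NN div 2) = y ^ (2 * (NN div 2))" by (simp only: y[symmetric] power_mult)
  also have "2 * (NN div 2) = NN" using NN2 by simp
  finally show "x ^ (NN div 2) = 1" using pow_NN \<open>y \<noteq> 0\<close> by simp
next
  assume h: "x ^ (NN div 2) = 1"
  obtain k where k: "x = \<zeta> ^ k" using prim assms unfolding primitive_elem_def by auto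
  then have "\<zeta> ^ (k * (NN div 2)) = 1" using h by (simp only: power_mult)
  then have "NN dvd k * (NN div 2)" by (rule zeta_order)
  then have "NN div 2 * 2 dvd NN div 2 * k" by (simp only: NN2 mult.commute[of k])
  then have "2 dvd k" using nat_mult_dvd_cancel1[OF NN2_pos] by blast
  then obtain j where "k = 2 * j" by (elim evenE)
  then have "x = (\<zeta> ^ j) ^ 2" using k by (simp only: power_mult[symmetric] mult.commute[of 2])
  then show "is_square x" unfolding Defs.is_square_def by auto
qed

definition "eps = \<zeta> ^ ((q + 1) div 2)"

lemma eps_ne0[simp]: "eps \<noteq> 0" unfolding eps_def using zeta_ne0 by simp

lemma NN_fact: "NN div 2 = (q + 1) div 2 * (q - 1)"
proof -
  obtain h where h: "q + 1 = 2 * h" using oddq by (metis evenE odd_even_add odd_one)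
  have "NN = (q + 1) * (q - 1)" using q_ge by (cases q) auto
  then have "NN = 2 * h * (q - 1)" unfolding h .
  then have "NN = 2 * (h * (q - 1))" by (simp only: mult.assoc)
  then show ?thesis using h by simp
qed

lemma cj_eps[simp]: "cj eps = - eps"
proof -
  have "eps ^ (q - 1) = \<zeta> ^ ((q + 1) div 2 * (q - 1))" unfolding eps_def by (simp only: power_mult)
  also have "\<dots> = -1" using zeta_half NN_fact by simp
  finally have "eps ^ (q - 1) = -1" .
  then have "eps ^ (q - 1 + 1) = - eps" by (simp only: power_add) simp
  then show ?thesis using q_ge unfolding cj_def by simp
qed

lemma Fq_sqrt:
  assumes "cj d = d"
  shows "\<exists>s. s ^ 2 = d \<and> (\<not> (\<exists>y. cj y = y \<and> y ^ 2 = d) \<longrightarrow> d ^ ((q + 1) div 2) = - d)"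
proof (cases "d = 0")
  case True
  have "(0::'a) ^ 2 = d" using True by simp
  moreover have "\<exists>y. cj y = y \<and> y ^ 2 = d" using True by (intro exI[of _ 0]) simp
  ultimately show ?thesis by blast
next
  case False
  define h where "h = (q + 1) div 2"
  have qh: "q + 1 = 2 * h" using oddq unfolding h_def by simp
  obtain k where k: "d = \<zeta> ^ k" using prim False unfolding primitive_elem_def by auto
  have "\<zeta> ^ (k * q) = \<zeta> ^ k" using assms k unfolding cj_def by (simp only: power_mult)
  moreover have "k * q = k * (q - 1) + k" using q_ge by (cases q) auto
  ultimately have "\<zeta> ^ (k * (q - 1)) * \<zeta> ^ k = 1 * \<zeta> ^ k"
    by (simp add: power_add)
  then have "\<zeta> ^ (k * (q - 1)) = 1" using zeta_ne0 by simp
  then have "NN dvd k * (q - 1)" by (rule zeta_order)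
  moreover have "NN = (q + 1) * (q - 1)" using q_ge by (cases q) auto
  moreover have "q - 1 > 0" using q_ge by simp
  ultimately have "(q - 1) * (q + 1) dvd (q - 1) * k" by (simp only: mult.commute)
  then have "(q + 1) dvd k" using nat_mult_dvd_cancel1[of "q - 1"] \<open>q - 1 > 0\<close> by blast
  then obtain i where i: "k = (q + 1) * i" by (elim dvdE)
  then have i: "k = 2 * h * i" using qh by (simp only:)
  define s where "s = \<zeta> ^ (h * i)"
  have s2: "s ^ 2 = d" unfolding s_def k i
    by (simp only: power_mult[symmetric]) (simp only: mult.assoc mult.commute mult.left_commute)
  have "d ^ h = - d" if nsq: "\<not> (\<exists>y. cj y = y \<and> y ^ 2 = d)"
  proof -
    have NNh: "NN div 2 = h * (q - 1)" using NN_fact h_def by simp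
    have "odd i"
    proof
      assume "even i"
      then obtain i' where i': "i = 2 * i'" by auto
      have e1: "h * (2 * i') * (q - 1) = NN * i'"
        using NNh NN2 by (metis mult.assoc mult.commute)
      have "s ^ (q - 1) = \<zeta> ^ (h * (2 * i') * (q - 1))"
        unfolding s_def i' by (simp only: power_mult)
      also have "\<dots> = (\<zeta> ^ NN) ^ i'" unfolding e1 by (simp only: power_mult)
      finally have "s ^ (q - 1) = (\<zeta> ^ NN) ^ i'" .
      then have "s ^ (q - 1) = 1" using pow_NN zeta_ne0 by simp
      then have "s ^ (q - 1 + 1) = s" by (simp only: power_add) simp
      then have "cj s = s" using q_ge unfolding cj_def by simp
      then show False using nsq s2 by auto
    qed
    define g where "g = (q - 1) div 2"
    have g: "q - 1 = 2 * g" "h = g + 1" using oddq q_ge unfolding g_def h_def by auto presburger+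
    have e2: "2 * h * i * g = h * (2 * g) * i" by (simp only: mult.assoc mult.commute mult.left_commute)
    have "d ^ g = (\<zeta> ^ (NN div 2)) ^ i"
      unfolding k i NNh g(1) by (simp only: power_mult[symmetric] e2)
    also have "\<dots> = -1" using zeta_half \<open>odd i\<close> by simp
    finally show "d ^ h = - d" using g(2) by simp
  qed
  then show ?thesis using s2 h_def by blast
qed

end

lemma card_roots_monom:
  fixes r :: "'a::field poly"
  assumes "n \<ge> 2" "degree r \<le> 1"
  shows "card {x. x ^ n - poly r x = 0} \<le> n"
proof -
  define p where "p = monom (1::'a) n - r"
  have "coeff r n = 0" using assms by (intro coeff_eq_0) simp
  then have c: "coeff p n = 1" unfolding p_def by (simp add: coeff_diff coeff_monom)
  then have "p \<noteq> 0" by auto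
  have "degree r \<le> n" using assms by simp
  then have "degree p \<le> n" unfolding p_def
    by (intro degree_diff_le degree_monom_le)
  moreover have "{x. x ^ n - poly r x = 0} = {x. poly p x = 0}" unfolding p_def by (simp add: poly_monom)
  ultimately show ?thesis using card_poly_roots_bound[OF \<open>p \<noteq> 0\<close>] by simp
qed

lemma nat_aux1: "n \<le> f + a \<Longrightarrow> n = a + b \<Longrightarrow> b \<le> (f::nat)" by linarith

lemma card_fibers:
  assumes "finite S" "finite A" "f ` A \<subseteq> S"
  shows "card A = (\<Sum>s\<in>S. card {a \<in> A. f a = s})"
  using sum.group[OF assms(2,1,3), of "\<lambda>_. 1::nat"] by simp

context US
begin

lemma card_Fq_le: "card {x::'a. cj x = x} \<le> q"
proof -
  have "{x::'a. cj x = x} = {x. x ^ q - poly [:0, 1:] x = 0}" by (auto simp: cj_def)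
  then show ?thesis using card_roots_monom[of q "[:0,1:]"] q_ge by simp
qed

lemma card_fib_le: "card {z::'a. z * cj z = w} \<le> q + 1"
proof -
  have "{z::'a. z * cj z = w} = {x. x ^ (q + 1) - poly [:w:] x = 0}" by (auto simp: cj_def)
  then show ?thesis using card_roots_monom[of "q + 1" "[:w:]"] q_ge by simp
qed

lemma norm_fiber:
  assumes w: "w \<noteq> 0" "cj w = w"
  shows "card {z::'a. z * cj z = w} = q + 1"
proof -
  define S where "S = {x::'a. cj x = x} - {0}"
  have cS: "card S \<le> q - 1" unfolding S_def using card_Fq_le
    by (simp add: card_Diff_singleton)
  define fib where "fib s = card {z::'a. z * cj z = s}" for s
  have fibz: "{z \<in> UNIV - {0}. z * cj z = s} = {z. z * cj z = s}" if "s \<in> S" for s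
    using that unfolding S_def by auto
  have "card (UNIV - {0::'a}) = (\<Sum>s\<in>S. card {z \<in> UNIV - {0}. z * cj z = s})"
    by (rule card_fibers) (auto simp: S_def mult.commute)
  also have "\<dots> = (\<Sum>s\<in>S. fib s)" unfolding fib_def by (rule sum.cong[OF refl]) (simp only: fibz)
  finally have eq: "NN = (\<Sum>s\<in>S. fib s)" using card by (simp add: card_Diff_singleton power2_eq_square)
  have wS: "w \<in> S" using w unfolding S_def by auto
  have "(\<Sum>s\<in>S. fib s) = fib w + (\<Sum>s\<in>S - {w}. fib s)"
    using wS by (simp add: sum.remove)
  also have "(\<Sum>s\<in>S - {w}. fib s) \<le> (\<Sum>s\<in>S - {w}. q + 1)"
    unfolding fib_def by (rule sum_mono) (rule card_fib_le)
  also have "\<dots> = (card S - 1) * (q + 1)" using wS by (simp add: card_Diff_singleton)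
  finally have "NN \<le> fib w + (card S - 1) * (q + 1)" using eq by simp
  moreover have "(card S - 1) * (q + 1) \<le> (q - 2) * (q + 1)"
    using cS by (intro mult_le_mono1) simp
  ultimately have "NN \<le> fib w + (q - 2) * (q + 1)" using add_le_mono order_trans by blast
  moreover have "NN = (q - 2) * (q + 1) + (q + 1)"
  proof -
    obtain r where r: "q = r + 2" using q_ge by (intro that[of "q - 2"]) simp
    have "(r + 2) * (r + 2) - 1 = r * (r + 2 + 1) + (r + 2 + 1)" by (simp add: algebra_simps)
    then show ?thesis unfolding r by simp
  qed
  ultimately have "fib w \<ge> q + 1" using nat_aux1 by blast
  then show ?thesis using card_fib_le[of w] unfolding fib_def by simp
qed

end

context US
begin

definition "dl = cj \<beta> - \<beta>"
definition "DD = dl ^ 2 + 4 * \<alpha> * cj \<alpha>"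
definition "Qf c = cj \<alpha> * (cj c) ^ 2 - \<alpha> * c ^ 2 + dl * c * cj c"
definition "gf c = 2 * \<alpha> * c ^ 2 - dl * c * cj c"
definition "phi c = 2 * \<alpha> * c - dl * cj c"

lemma cj_dl[simp]: "cj dl = - dl" unfolding dl_def by simp

lemma DD_eq: "(\<beta> ^ q - \<beta>) ^ 2 + 4 * \<alpha> ^ (q + 1) = DD"
  unfolding DD_def dl_def by (simp add: pow_Suc_q cj_def)

lemma cj_DD[simp]: "cj DD = DD" unfolding DD_def by (simp add: mult.commute mult.left_commute)

lemma DD_nonsq: "\<not> (\<exists>y. cj y = y \<and> y ^ 2 = DD)"
  using ns unfolding nonsquare_in_Fq_def subfield_q_def DD_eq by (auto simp: cj_def)

lemma DD_ne0[simp]: "DD \<noteq> 0"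
  using DD_nonsq by (metis cj_0 zero_power2)

lemma DD_half: "DD ^ ((q + 1) div 2) = - DD"
  using Fq_sqrt[OF cj_DD] DD_nonsq by blast

lemma cj_Qf[simp]: "cj (Qf c) = - Qf c"
  unfolding Qf_def by (simp add: algebra_simps)

lemma aniso: assumes "Qf v = 0" shows "v = 0"
proof (rule ccontr)
  assume v: "v \<noteq> 0"
  define t where "t = cj v / v"
  have cv: "cj v = t * v" unfolding t_def using v by simp
  have ct: "cj t = inverse t" unfolding t_def using v by (simp add: divide_inverse)
  have t0: "t \<noteq> 0" unfolding t_def using v by simp
  have "v ^ 2 * (cj \<alpha> * t ^ 2 + dl * t - \<alpha>) = Qf v"
    unfolding Qf_def cv by (simp add: algebra_simps power2_eq_square)
  then have eq: "cj \<alpha> * t ^ 2 + dl * t - \<alpha> = 0" using assms v by simp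
  define u where "u = 2 * cj \<alpha> * t + dl"
  have u2: "u ^ 2 = DD"
  proof -
    have "u ^ 2 = 4 * cj \<alpha> * (cj \<alpha> * t ^ 2 + dl * t) + dl ^ 2"
      unfolding u_def by (simp add: algebra_simps power2_eq_square)
    also have "cj \<alpha> * t ^ 2 + dl * t = \<alpha>" using eq by (simp add: algebra_simps)
    finally show ?thesis unfolding DD_def by (simp add: algebra_simps)
  qed
  have "cj u * t = u * t"
  proof -
    have "cj u * t = 2 * \<alpha> - dl * t" unfolding u_def using ct t0 by (simp add: algebra_simps)
    also have "\<dots> = u * t" unfolding u_def using eq by algebra
    finally show ?thesis .
  qed
  then have "cj u = u" using t0 by simp
  then show False using DD_nonsq u2 by blast
qed

lemma phi_inj: "inj phi"
proof (rule injI)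
  fix a b assume "phi a = phi b"
  then have "phi (a - b) = 0" unfolding phi_def by (simp add: algebra_simps)
  moreover have "c = 0" if "phi c = 0" for c
  proof -
    have e1: "2 * \<alpha> * c = dl * cj c" using that unfolding phi_def by simp
    have "cj (2 * \<alpha> * c) = cj (dl * cj c)" by (rule arg_cong[OF e1])
    then have e2: "2 * cj \<alpha> * cj c = - dl * c" by simp
    have "(2 * \<alpha> * c) * (2 * cj \<alpha> * cj c) = (dl * cj c) * (- dl * c)" using e1 e2 by simp
    then have "DD * (c * cj c) = 0" unfolding DD_def by (simp add: algebra_simps power2_eq_square)
    then show "c = 0" by simp
  qed
  ultimately have "a - b = 0" by blast
  then show "a = b" by simp
qed

lemma phi_surj: "\<exists>c. phi c = m"
  using phi_inj finite_UNIV_inj_surj[of phi] by (metis surjD finite)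

lemma tang_id:
  "cj (phi c * x + eps - (\<alpha> * x ^ 2 + \<beta> * (x * cj x))) - (phi c * x + eps - (\<alpha> * x ^ 2 + \<beta> * (x * cj x)))
    = - (Qf (x - c) - Qf c + 2 * eps)"
  unfolding phi_def Qf_def dl_def by (simp add: algebra_simps power2_eq_square)

lemma y_id: "cj (gf c + eps) - (gf c + eps) = 2 * Qf c - 2 * eps"
  unfolding gf_def Qf_def by (simp add: algebra_simps power2_eq_square)

end

context US
begin

lemma card_E: "card {c. Qf c = 2 * eps} = q + 1"
proof -
  obtain \<sigma> where s2: "\<sigma> ^ 2 = DD" using Fq_sqrt[OF cj_DD] by blast
  have "cj \<sigma> ^ 2 = cj DD" by (simp only: cj_power[symmetric] s2)
  then have "cj \<sigma> ^ 2 = \<sigma> ^ 2" using s2 by simp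
  then have "cj \<sigma> = \<sigma> \<or> cj \<sigma> = - \<sigma>" by (simp add: power2_eq_iff)
  then have cs: "cj \<sigma> = - \<sigma>" using DD_nonsq s2 by blast
  have s0: "\<sigma> \<noteq> 0" using s2 by auto
  define \<mu> where "\<mu> = \<sigma> - dl"
  have cmu: "cj \<mu> = - \<mu>" unfolding \<mu>_def using cs by simp
  have ac: "cj \<alpha> \<noteq> 0" using a0 by simp
  have mu0: "\<mu> \<noteq> 0"
  proof
    assume "\<mu> = 0"
    then have "\<sigma> = dl" unfolding \<mu>_def by simp
    then have "4 * \<alpha> * cj \<alpha> = 0" using s2 unfolding DD_def by simp
    then show False using a0 ac by simp
  qed
  define t where "t = \<mu> / (2 * cj \<alpha>)"
  define \<kappa> where "\<kappa> = 2 * \<alpha> * cj \<alpha> / \<mu>"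
  define z where "z c = cj c - t * c" for c
  have ct: "cj t = - \<mu> / (2 * \<alpha>)" unfolding t_def using cmu by simp
  have mu2: "\<mu> ^ 2 = 4 * \<alpha> * cj \<alpha> + 2 * dl ^ 2 - 2 * \<sigma> * dl"
    unfolding \<mu>_def using s2 unfolding DD_def by (simp add: power2_eq_square algebra_simps)
  have fac: "Qf c = \<kappa> * (z c * cj (z c))" for c
  proof -
    have "\<kappa> * (z c * cj (z c)) = \<kappa> * ((cj c - t * c) * (c + \<mu> / (2 * \<alpha>) * cj c))"
      unfolding z_def using ct by simp
    also have "\<dots> = cj \<alpha> * (cj c) ^ 2 - \<alpha> * c ^ 2
        + (2 * \<alpha> * cj \<alpha> / \<mu> - \<mu> / 2) * c * cj c"
      unfolding \<kappa>_def t_def using a0 ac mu0 by (simp add: field_simps power2_eq_square)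
    also have "2 * \<alpha> * cj \<alpha> / \<mu> - \<mu> / 2 = (4 * \<alpha> * cj \<alpha> - \<mu> ^ 2) / (2 * \<mu>)"
      using mu0 by (simp add: field_simps power2_eq_square)
    also have "4 * \<alpha> * cj \<alpha> - \<mu> ^ 2 = 2 * dl * \<mu>" by (simp only: mu2) (simp add: \<mu>_def algebra_simps power2_eq_square)
    also have "2 * dl * \<mu> / (2 * \<mu>) = dl" using mu0 by simp
    finally show ?thesis unfolding Qf_def by simp
  qed
  have zlin: "z a - z b = z (a - b)" for a b unfolding z_def by (simp add: algebra_simps)
  have z0: "c = 0" if "z c = 0" for c
  proof -
    have e1: "cj c = t * c" using that unfolding z_def by simp
    have "cj (cj c) = cj (t * c)" by (rule arg_cong[OF e1])
    then have "c = cj (t * c)" by simp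
    also have "\<dots> = cj t * t * c" using e1 by simp
    finally have "(1 - cj t * t) * c = 0" by (simp add: algebra_simps)
    moreover have "1 - cj t * t \<noteq> 0"
    proof
      assume "1 - cj t * t = 0"
      then have "4 * \<alpha> * cj \<alpha> + \<mu> ^ 2 = 0" unfolding ct t_def using a0 ac cmu
        by (simp add: field_simps power2_eq_square)
      then have h8: "8 * \<alpha> * cj \<alpha> + 2 * dl ^ 2 - 2 * \<sigma> * dl = 0" unfolding mu2
        by (simp add: algebra_simps)
      have "2 * \<sigma> * \<mu> = 2 * \<sigma> ^ 2 - 2 * \<sigma> * dl" unfolding \<mu>_def by (simp add: algebra_simps power2_eq_square)
      also have "\<dots> = 8 * \<alpha> * cj \<alpha> + 2 * dl ^ 2 - 2 * \<sigma> * dl" unfolding s2 DD_def by (simp add: algebra_simps)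
      finally have "2 * \<sigma> * \<mu> = 0" using h8 by simp
      then show False using s0 mu0 by simp
    qed
    ultimately show "c = 0" by simp
  qed
  have zinj: "inj z"
  proof (rule injI)
    fix a b assume "z a = z b"
    then have "z (a - b) = 0" using zlin[of a b] by simp
    then show "a = b" using z0 by fastforce
  qed
  have "{c. Qf c = 2 * eps} = {c. z c * cj (z c) = 2 * eps / \<kappa>}"
  proof -
    have k0: "\<kappa> \<noteq> 0" unfolding \<kappa>_def using a0 ac mu0 by simp
    show ?thesis unfolding fac using k0 by (auto simp: field_simps)
  qed
  also have "\<dots> = z -` {w. w * cj w = 2 * eps / \<kappa>}" by auto
  finally have "card {c. Qf c = 2 * eps} = card (z -` {w. w * cj w = 2 * eps / \<kappa>})" by simp
  also have "\<dots> = card {w. w * cj w = 2 * eps / \<kappa>}"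
  proof -
    have "surj z" using zinj finite_UNIV_inj_surj[of z] by simp
    then show ?thesis by (intro card_vimage_inj[OF zinj]) auto
  qed
  also have "\<dots> = q + 1"
  proof (rule norm_fiber)
    show "2 * eps / \<kappa> \<noteq> 0" unfolding \<kappa>_def using a0 ac mu0 by simp
    show "cj (2 * eps / \<kappa>) = 2 * eps / \<kappa>" unfolding \<kappa>_def using cmu by simp
  qed
  finally show ?thesis .
qed

end

context US
begin

definition "Nn c = c * cj c"
abbreviation "hh \<equiv> (q + 1) div 2"

lemma hh2: "2 * hh = q + 1" using oddq by simp

lemma cj_Nn[simp]: "cj (Nn c) = Nn c" unfolding Nn_def by (simp add: mult.commute)
lemma Nn_minus[simp]: "Nn (- c) = Nn c" unfolding Nn_def by simp
lemma gf_minus[simp]: "gf (- c) = gf c" unfolding gf_def by simp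
lemma gf_0[simp]: "gf 0 = 0" unfolding gf_def by simp
lemma Nn_0[simp]: "Nn 0 = 0" unfolding Nn_def by simp
lemma Nn_0_iff[simp]: "Nn c = 0 \<longleftrightarrow> c = 0" unfolding Nn_def by simp

lemma pow_h: assumes "c ^ 2 = w" shows "w ^ hh = Nn c"
proof -
  have "w ^ hh = c ^ (2 * hh)" unfolding assms[symmetric] by (simp only: power_mult)
  also have "\<dots> = c ^ (q + 1)" using hh2 by simp
  finally show ?thesis unfolding Nn_def pow_Suc_q .
qed

lemma chi_alpha: "(cj \<alpha> / \<alpha>) ^ hh = \<alpha> ^ (NN div 2)"
proof -
  have "\<alpha> ^ (q - 1) * \<alpha> = cj \<alpha>" unfolding cj_def using q_ge
    by (metis Suc_diff_1 gr0I not_numeral_le_zero power_Suc2 zero_le)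
  then have "cj \<alpha> / \<alpha> = \<alpha> ^ (q - 1)" using a0 by (simp add: field_simps)
  then have "(cj \<alpha> / \<alpha>) ^ hh = \<alpha> ^ ((q - 1) * hh)" by (simp only: power_mult)
  also have "(q - 1) * hh = NN div 2" using NN_fact by simp
  finally show ?thesis .
qed

lemma gf_facts:
  assumes "gf c = s"
  shows "c ^ 2 = (s + dl * Nn c) / (2 * \<alpha>)"
    and "DD * Nn c ^ 2 - dl * (cj s - s) * Nn c - s * cj s = 0"
proof -
  show c2: "c ^ 2 = (s + dl * Nn c) / (2 * \<alpha>)"
    using assms a0 unfolding gf_def Nn_def by (auto simp: field_simps)
  have e1: "2 * \<alpha> * c ^ 2 = s + dl * Nn c" using assms unfolding gf_def Nn_def by (simp add: diff_eq_eq mult.assoc)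
  have "cj (2 * \<alpha> * c ^ 2) = cj (s + dl * Nn c)" by (rule arg_cong[OF e1])
  then have e2: "2 * cj \<alpha> * cj c ^ 2 = cj s - dl * Nn c" by simp
  have "(2 * \<alpha> * c ^ 2) * (2 * cj \<alpha> * cj c ^ 2) = (s + dl * Nn c) * (cj s - dl * Nn c)"
    using e1 e2 by simp
  then show "DD * Nn c ^ 2 - dl * (cj s - s) * Nn c - s * cj s = 0"
    unfolding DD_def Nn_def by (simp add: algebra_simps power2_eq_square)
qed

lemma w_prod:
  assumes S: "DD * (N1 + N2) = dl * (cj s - s)" and P: "DD * (N1 * N2) = - (s * cj s)"
  shows "((s + dl * N1) / (2 * \<alpha>)) * ((s + dl * N2) / (2 * \<alpha>)) = cj \<alpha> * s ^ 2 / (\<alpha> * DD)"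
proof -
  have "DD * ((s + dl * N1) * (s + dl * N2)) = DD * s ^ 2 + s * dl * (DD * (N1 + N2)) + dl ^ 2 * (DD * (N1 * N2))"
    by (simp add: algebra_simps power2_eq_square)
  also have "\<dots> = DD * s ^ 2 + s * dl * (dl * (cj s - s)) + dl ^ 2 * (- (s * cj s))" by (simp only: S P)
  also have "\<dots> = 4 * \<alpha> * cj \<alpha> * s ^ 2" unfolding DD_def by (simp add: algebra_simps power2_eq_square)
  finally have "DD * ((s + dl * N1) * (s + dl * N2)) = 4 * \<alpha> * cj \<alpha> * s ^ 2" .
  then show ?thesis using a0 by (simp add: field_simps power2_eq_square)
qed

lemma w_prod_pow:
  assumes S: "DD * (N1 + N2) = dl * (cj s - s)" and P: "DD * (N1 * N2) = - (s * cj s)"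
  shows "(((s + dl * N1) / (2 * \<alpha>)) * ((s + dl * N2) / (2 * \<alpha>))) ^ hh = \<alpha> ^ (NN div 2) * (N1 * N2)"
proof -
  have "(cj \<alpha> * s ^ 2 / (\<alpha> * DD)) ^ hh = ((cj \<alpha> / \<alpha>) * s ^ 2 * inverse DD) ^ hh"
    by (simp add: field_simps)
  also have "\<dots> = (cj \<alpha> / \<alpha>) ^ hh * (s ^ 2) ^ hh * inverse (DD ^ hh)"
    by (simp only: power_mult_distrib power_inverse)
  also have "\<dots> = \<alpha> ^ (NN div 2) * (s * cj s) * inverse (- DD)"
    using pow_h[of s "s^2"] DD_half chi_alpha unfolding Nn_def by simp
  also have "\<dots> = \<alpha> ^ (NN div 2) * (N1 * N2)"
  proof -
    have "N1 * N2 = - (s * cj s) / DD" using P by (simp add: field_simps)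
    then show ?thesis by (simp add: divide_inverse inverse_minus_eq)
  qed
  finally have "(cj \<alpha> * s ^ 2 / (\<alpha> * DD)) ^ hh = \<alpha> ^ (NN div 2) * (N1 * N2)" .
  then show ?thesis using w_prod[OF S P] by simp
qed

lemma vieta:
  assumes "DD * N1 ^ 2 - X * N1 - K = 0" "DD * N2 ^ 2 - X * N2 - K = 0" "N1 \<noteq> N2"
  shows "DD * (N1 + N2) = X" "DD * (N1 * N2) = - K"
proof -
  have "(N1 - N2) * (DD * (N1 + N2) - X) = 0" using assms(1,2)
    by (simp add: algebra_simps power2_eq_square)
  then show S: "DD * (N1 + N2) = X" using assms(3) by simp
  have "- (DD * (N1 * N2)) = K" using assms(1) S[symmetric] by (simp add: algebra_simps power2_eq_square)
  then show "DD * (N1 * N2) = - K" by (metis minus_minus)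
qed

lemma two_norms:
  assumes "gf c1 = s" "gf c2 = s" "Nn c1 \<noteq> Nn c2" "s \<noteq> 0"
  shows "is_square \<alpha>"
proof -
  note P1 = gf_facts[OF assms(1)] and P2 = gf_facts[OF assms(2)]
  note V = vieta[OF P1(2) P2(2) assms(3)]
  have "(((s + dl * Nn c1) / (2 * \<alpha>)) * ((s + dl * Nn c2) / (2 * \<alpha>))) ^ hh = Nn c1 * Nn c2"
    by (simp only: power_mult_distrib pow_h[OF P1(1)] pow_h[OF P2(1)])
  then have "\<alpha> ^ (NN div 2) * (Nn c1 * Nn c2) = Nn c1 * Nn c2" using w_prod_pow[OF V] by simp
  moreover have "Nn c1 * Nn c2 \<noteq> 0" using V(2) assms(4) by auto
  ultimately have "\<alpha> ^ (NN div 2) = 1" by simp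
  then show ?thesis using sq_iff[OF a0] by simp
qed

lemma second_root:
  assumes sq: "is_square \<alpha>" and g1: "gf c1 = s" and s0: "s \<noteq> 0"
  defines "N2 \<equiv> dl * (cj s - s) / DD - Nn c1"
  shows "\<exists>c2. gf c2 = s \<and> Nn c2 = N2"
proof -
  note P1 = gf_facts[OF g1]
  have S: "DD * (Nn c1 + N2) = dl * (cj s - s)" unfolding N2_def by (simp add: field_simps)
  have P: "DD * (Nn c1 * N2) = - (s * cj s)" using P1(2) unfolding N2_def
    by (simp add: field_simps power2_eq_square algebra_simps)
  have chi: "\<alpha> ^ (NN div 2) = 1" using sq sq_iff[OF a0] by simp
  define w1 where "w1 = (s + dl * Nn c1) / (2 * \<alpha>)"
  define w2 where "w2 = (s + dl * N2) / (2 * \<alpha>)"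
  have "(w1 * w2) ^ hh = Nn c1 * N2" using w_prod_pow[OF S P] chi unfolding w1_def w2_def by simp
  moreover have "w1 ^ hh = Nn c1" unfolding w1_def using pow_h[OF P1(1)] .
  moreover have "c1 \<noteq> 0" using g1 s0 by auto
  ultimately have w2h: "w2 ^ hh = N2" by (simp add: power_mult_distrib)
  have N20: "N2 \<noteq> 0" using P s0 by auto
  have cN2: "cj N2 = N2" unfolding N2_def by (simp add: field_simps)
  have w20: "w2 \<noteq> 0" using w2h N20 hh2 by (auto simp: power_0_left split: if_splits)
  have "w2 ^ (NN div 2) = (w2 ^ hh) ^ (q - 1)" using NN_fact by (simp only: power_mult[symmetric] mult.commute)
  also have "\<dots> = N2 ^ (q - 1)" using w2h by simp
  also have "\<dots> = 1"
  proof -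
    have "N2 ^ (q - 1) * N2 = N2 ^ q" using q_ge by (metis Suc_diff_1 gr0I not_numeral_le_zero power_Suc2 zero_le)
    also have "\<dots> = N2" using cN2 unfolding cj_def .
    finally show ?thesis using N20 by simp
  qed
  finally have "is_square w2" using sq_iff[OF w20] by simp
  then obtain c2 where c2: "c2 ^ 2 = w2" unfolding Defs.is_square_def by auto
  have "Nn c2 = N2" using pow_h[OF c2] w2h by simp
  moreover have "gf c2 = s" unfolding gf_def using c2 \<open>Nn c2 = N2\<close> a0 unfolding w2_def Nn_def
    by (simp add: field_simps)
  ultimately show ?thesis by blast
qed

end

context US
begin

lemma same_norm:
  assumes "gf c = s" "gf c' = s" "Nn c = Nn c'"
  shows "c = c' \<or> c = - c'"
proof -
  have "c ^ 2 = c' ^ 2" using gf_facts(1)[OF assms(1)] gf_facts(1)[OF assms(2)] assms(3) by simp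
  then show ?thesis by (simp add: power2_eq_iff)
qed

lemma norm_alt:
  assumes "gf c = s" "gf c1 = s"
  shows "Nn c = Nn c1 \<or> Nn c = dl * (cj s - s) / DD - Nn c1"
proof (cases "Nn c = Nn c1")
  case False
  have "DD * (Nn c + Nn c1) = dl * (cj s - s)"
    using vieta(1)[OF gf_facts(2)[OF assms(1)] gf_facts(2)[OF assms(2)] False] .
  then show ?thesis by (simp add: field_simps)
qed simp

lemma pair_card: "c \<noteq> 0 \<Longrightarrow> card {c, - (c::'a)} = 2"
proof -
  assume c: "c \<noteq> 0"
  have "c \<noteq> - c"
  proof
    assume "c = - c"
    then have "2 * c = 0" by simp
    then show False using c by simp
  qed
  then show ?thesis by simp
qed

lemma fiber_card:
  assumes s0: "s \<noteq> 0"
  shows "\<not> is_square \<alpha> \<Longrightarrow> card {c. gf c = s} \<in> {0, 2}"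
    and "is_square \<alpha> \<Longrightarrow> card {c. gf c = s} \<in> {0, 2, 4}"
    and "is_square \<alpha> \<Longrightarrow> card {c. gf c = s} = 2 \<Longrightarrow> 4 * DD * (s * cj s) = - ((dl * (cj s - s)) ^ 2)"
proof -
  let ?A = "{c. gf c = s}"
  have main: "card ?A = 0 \<or> (card ?A = 2 \<and> (is_square \<alpha> \<longrightarrow> 4 * DD * (s * cj s) = - ((dl * (cj s - s)) ^ 2)))
      \<or> (card ?A = 4 \<and> is_square \<alpha>)"
  proof (cases "?A = {}")
    case True then show ?thesis by simp
  next
    case False
    then obtain c1 where g1: "gf c1 = s" by auto
    have c10: "c1 \<noteq> 0" using g1 s0 by auto
    have pm: "c \<in> {c1, - c1}" if "gf c = s" "Nn c = Nn c1" for c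
      using same_norm[OF that(1) g1 that(2)] by auto
    define N2 where "N2 = dl * (cj s - s) / DD - Nn c1"
    show ?thesis
    proof (cases "is_square \<alpha> \<and> N2 \<noteq> Nn c1")
      case True
      obtain c2 where g2: "gf c2 = s" and n2: "Nn c2 = N2" using second_root[OF _ g1 s0] True N2_def by blast
      have c20: "c2 \<noteq> 0" using g2 s0 by auto
      have "?A = {c1, - c1, c2, - c2}"
      proof
        show "?A \<subseteq> {c1, - c1, c2, - c2}"
        proof
          fix c assume "c \<in> ?A"
          then have g: "gf c = s" by simp
          from norm_alt[OF g g1] show "c \<in> {c1, - c1, c2, - c2}"
          proof
            assume "Nn c = Nn c1" then show ?thesis using pm[OF g] by auto
          next
            assume "Nn c = dl * (cj s - s) / DD - Nn c1"
            then have "Nn c = Nn c2" using n2 N2_def by simp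
            then show ?thesis using same_norm[OF g g2] by auto
          qed
        qed
        show "{c1, - c1, c2, - c2} \<subseteq> ?A" using g1 g2 by auto
      qed
      moreover have "card {c1, - c1, c2, - c2} = 4"
      proof -
        have "c1 \<noteq> c2" "c1 \<noteq> - c2" "- c1 \<noteq> c2" "- c1 \<noteq> - c2"
          using True n2 by (metis Nn_minus)+
        moreover have "c1 \<noteq> - c1" "c2 \<noteq> - c2" using pair_card c10 c20 by fastforce+
        ultimately show ?thesis by simp
      qed
      ultimately show ?thesis using True by simp
    next
      case False
      have "?A = {c1, - c1}"
      proof
        show "?A \<subseteq> {c1, - c1}"
        proof
          fix c assume "c \<in> ?A"
          then have g: "gf c = s" by simp
          have "Nn c = Nn c1"
          proof (cases "is_square \<alpha>")
            case True
            then have "N2 = Nn c1" using False by simp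
            then show ?thesis using norm_alt[OF g g1] N2_def by auto
          next
            case nsq: False
            show ?thesis using two_norms[OF g g1 _ s0] nsq by blast
          qed
          then show "c \<in> {c1, - c1}" using pm[OF g] by simp
        qed
        show "{c1, - c1} \<subseteq> ?A" using g1 by auto
      qed
      then have cA: "card ?A = 2" using pair_card[OF c10] by simp
      have "4 * DD * (s * cj s) = - ((dl * (cj s - s)) ^ 2)" if sq: "is_square \<alpha>"
      proof -
        have "N2 = Nn c1" using False sq by simp
        then have h2: "2 * DD * Nn c1 = dl * (cj s - s)" unfolding N2_def by (simp add: field_simps)
        have "4 * DD * (DD * Nn c1 ^ 2 - dl * (cj s - s) * Nn c1 - s * cj s) = 0"
          using gf_facts(2)[OF g1] by simp
        then have "(2 * DD * Nn c1) ^ 2 - 2 * (dl * (cj s - s)) * (2 * DD * Nn c1) - 4 * DD * (s * cj s) = 0"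
          by (simp add: algebra_simps power2_eq_square)
        then show ?thesis unfolding h2 by (simp add: algebra_simps power2_eq_square)
      qed
      then show ?thesis using cA by simp
    qed
  qed
  show "\<not> is_square \<alpha> \<Longrightarrow> card ?A \<in> {0, 2}" using main by auto
  show "is_square \<alpha> \<Longrightarrow> card ?A \<in> {0, 2, 4}" using main by auto
  show "is_square \<alpha> \<Longrightarrow> card ?A = 2 \<Longrightarrow> 4 * DD * (s * cj s) = - ((dl * (cj s - s)) ^ 2)" using main by auto
qed

end

lemma smul3_simp[simp]: "smul3 c (x, y, z) = (c * x, c * y, c * z)"
  unfolding smul3_def by simp

lemma self_in_pt: "(v::'a::field \<times> 'a \<times> 'a) \<in> pt v"
  unfolding pt_def by (cases v) (auto intro!: exI[of _ 1])

lemma pt_smul: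
  fixes v :: "'a::field \<times> 'a \<times> 'a"
  assumes c: "c \<noteq> 0" shows "pt (smul3 c v) = pt v"
proof -
  obtain x y z where v: "v = (x, y, z)" by (cases v)
  show ?thesis unfolding pt_def v
  proof (intro set_eqI iffI)
    fix w assume "w \<in> {smul3 d (smul3 c (x, y, z)) | d. d \<noteq> 0}"
    then obtain d where d: "d \<noteq> 0" "w = smul3 d (smul3 c (x, y, z))" by auto
    show "w \<in> {smul3 d (x, y, z) | d. d \<noteq> 0}"
      using d c by (auto intro!: exI[of _ "d * c"] simp: mult.assoc)
  next
    fix w assume "w \<in> {smul3 d (x, y, z) | d. d \<noteq> 0}"
    then obtain d where d: "d \<noteq> 0" "w = smul3 d (x, y, z)" by auto
    show "w \<in> {smul3 d (smul3 c (x, y, z)) | d. d \<noteq> 0}"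
      using d c by (auto intro!: exI[of _ "d / c"])
  qed
qed

lemma pt_eq_iff: "pt v = pt w \<longleftrightarrow> (\<exists>c. c \<noteq> 0 \<and> w = smul3 c (v::'a::field \<times> 'a \<times> 'a))"
proof
  assume "pt v = pt w"
  then have "w \<in> pt v" using self_in_pt[of w] by simp
  then show "\<exists>c. c \<noteq> 0 \<and> w = smul3 c v" unfolding pt_def by auto
next
  assume "\<exists>c. c \<noteq> 0 \<and> w = smul3 c v"
  then show "pt v = pt w" using pt_smul by metis
qed

lemma pt_aff_eq[simp]: "pt (x, y, 1) = pt (x', y', (1::'a::field)) \<longleftrightarrow> x = x' \<and> y = y'"
  unfolding pt_eq_iff by auto

lemma pt_aff_inf[simp]: "pt (x, y, 1) \<noteq> pt (a, b, (0::'a::field))"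
  unfolding pt_eq_iff by auto

lemma pt_inf_aff[simp]: "pt (a, b, 0) \<noteq> pt (x, y, (1::'a::field))"
  using pt_aff_inf by metis

lemma mem_line:
  assumes "(x, y, z) \<noteq> (0, 0, 0)"
  shows "pt (x, y, z) \<in> line_of (a, b, c) \<longleftrightarrow> a * x + b * y + c * (z::'a::field) = 0"
proof
  assume "pt (x, y, z) \<in> line_of (a, b, c)"
  then obtain x' y' z' where e: "pt (x, y, z) = pt (x', y', z')" "a * x' + b * y' + c * z' = 0"
    unfolding line_of_def by auto
  then obtain d where "d \<noteq> 0" "(x', y', z') = smul3 d (x, y, z)" unfolding pt_eq_iff by blast
  then have "d * (a * x + b * y + c * z) = 0" using e(2) by (simp add: algebra_simps)
  then show "a * x + b * y + c * z = 0" using \<open>d \<noteq> 0\<close> by simp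
next
  assume "a * x + b * y + c * z = 0"
  then show "pt (x, y, z) \<in> line_of (a, b, c)" unfolding line_of_def using assms by auto
qed

lemma mem_line_aff[simp]: "pt (x, y, 1) \<in> line_of (a, b, c) \<longleftrightarrow> a * x + b * y + c = (0::'a::field)"
  using mem_line[of x y 1 a b c] by simp

lemma mem_line_Y[simp]: "pt (0, 1, 0) \<in> line_of (a, b, c) \<longleftrightarrow> b = (0::'a::field)"
  using mem_line[of 0 1 0 a b c] by simp

lemma mem_line_X[simp]: "pt (1, 0, 0) \<in> line_of (a, b, c) \<longleftrightarrow> a = (0::'a::field)"
  using mem_line[of 1 0 0 a b c] by simp

lemma line_elem:
  assumes "P \<in> line_of (a, b, c)"
  obtains x y where "P = pt (x, y, 1)" "a * x + b * y + c = (0::'a::field)"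
  | x y where "P = pt (x, y, 0)" "(x, y) \<noteq> (0, 0)" "a * x + b * y = (0::'a::field)"
proof -
  obtain x y z where P: "P = pt (x, y, z)" "(x, y, z) \<noteq> (0, 0, 0)" "a * x + b * y + c * z = 0"
    using assms unfolding line_of_def by auto
  show ?thesis
  proof (cases "z = 0")
    case True then show ?thesis using P that(2)[of x y] by auto
  next
    case False
    have "pt (x, y, z) = pt (x / z, y / z, 1)"
      unfolding pt_eq_iff using False by (intro exI[of _ "inverse z"]) (simp add: field_simps)
    moreover have "a * (x / z) + b * (y / z) + c = 0" using P(3) False
      by (simp add: field_simps)
    ultimately show ?thesis using P that(1) by auto
  qed
qed

lemma pg_line_cases:
  assumes "L \<in> pg_lines"
  obtains a b c where "L = line_of (a, b, c)" "(a, b, c) \<noteq> (0, 0, (0::'a::field))"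
  using assms unfolding pg_lines_def by auto

context US
begin

abbreviation "UU \<equiv> unital_ab q \<alpha> \<beta>"
definition "ff x = \<alpha> * x ^ 2 + \<beta> * (x * cj x)"
definition "pp c = pt (c, gf c + eps, 1)"
definition "EE = {c. Qf c = 2 * eps}"

lemma Fq_iff: "r \<in> subfield_q q \<longleftrightarrow> cj r = r" unfolding subfield_q_def cj_def by simp

lemma mem_U_aff: "pt (x, y, 1) \<in> UU \<longleftrightarrow> cj (y - ff x) = y - ff x"
proof
  assume "pt (x, y, 1) \<in> UU"
  then obtain x' r where "pt (x, y, 1) = pt (x', \<alpha> * x' ^ 2 + \<beta> * x' ^ (q + 1) + r, 1)" "cj r = r"
    unfolding unital_ab_def Fq_iff by auto
  then show "cj (y - ff x) = y - ff x" unfolding ff_def pow_Suc_q by auto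
next
  assume h: "cj (y - ff x) = y - ff x"
  have "pt (x, y, 1) = pt (x, \<alpha> * x ^ 2 + \<beta> * x ^ (q + 1) + (y - ff x), 1)"
    unfolding ff_def pow_Suc_q by simp
  then show "pt (x, y, 1) \<in> UU" unfolding unital_ab_def Fq_iff using h by blast
qed

lemma inf_in_U: "pt (0, 1, 0) \<in> UU" unfolding unital_ab_def by simp

lemma U_inf: "pt (x, y, 0) \<in> UU \<Longrightarrow> x = 0"
  unfolding unital_ab_def by (auto simp: pt_eq_iff)

lemma U_cases:
  assumes "P \<in> UU"
  obtains "P = pt (0, 1, 0)" | x y where "P = pt (x, y, 1)" "cj (y - ff x) = y - ff x"
proof -
  from assms consider "P = pt (0, 1, 0)" | x r where "P = pt (x, \<alpha> * x ^ 2 + \<beta> * x ^ (q + 1) + r, 1)" "cj r = r"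
    unfolding unital_ab_def Fq_iff by auto
  then show ?thesis
  proof cases
    case 1 then show ?thesis using that(1) by simp
  next
    case (2 x r)
    then show ?thesis using that(2)[of x "\<alpha> * x ^ 2 + \<beta> * x ^ (q + 1) + r"] unfolding ff_def pow_Suc_q by simp
  qed
qed

lemma Qf_0[simp]: "Qf 0 = 0" unfolding Qf_def by simp
lemma Qf_minus[simp]: "Qf (- v) = Qf v" unfolding Qf_def by simp

lemma phi_gf: "phi c * c = gf c" unfolding phi_def gf_def by (simp add: algebra_simps power2_eq_square)

lemma h_iff:
  "cj (phi c * x + eps - ff x) = phi c * x + eps - ff x \<longleftrightarrow> Qf (x - c) = Qf c - 2 * eps"
proof -
  let ?H = "phi c * x + eps - ff x"
  have T: "cj ?H - ?H = - (Qf (x - c) - Qf c + 2 * eps)" using tang_id[of c x] unfolding ff_def .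
  have "cj ?H = ?H \<longleftrightarrow> cj ?H - ?H = 0" by (rule right_minus_eq[symmetric])
  also have "\<dots> \<longleftrightarrow> Qf (x - c) - Qf c + 2 * eps = 0" unfolding T by (simp only: neg_equal_0_iff_equal)
  also have "\<dots> \<longleftrightarrow> Qf (x - c) = Qf c - 2 * eps" by (simp only: diff_add_eq eq_diff_eq right_minus_eq)
  finally show ?thesis .
qed

lemma R1_ne: "(0, eps, 1) \<noteq> (0, 0, 0::'a)" by simp

lemma Ped_sub: "pedal UU (pt (0, eps, 1)) \<subseteq> pp ` EE"
proof
  fix Q assume "Q \<in> pedal UU (pt (0, eps, 1))"
  then obtain L where tl: "tangent_line UU L" and R: "pt (0, eps, 1) \<in> L" and LU: "L \<inter> UU = {Q}"
    unfolding pedal_def by auto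
  have "L \<in> pg_lines" using tl unfolding tangent_line_def by simp
  then obtain a b cc where L: "L = line_of (a, b, cc)" "(a, b, cc) \<noteq> (0, 0, 0)"
    by (rule pg_line_cases)
  have Rb: "b * eps + cc = 0" using R unfolding L by simp
  show "Q \<in> pp ` EE"
  proof (cases "b = 0")
    case True
    then have "cc = 0" using Rb by simp
    have "pt (0, 1, 0) \<in> L \<inter> UU" using inf_in_U True \<open>cc = 0\<close> unfolding L by simp
    moreover have "pt (0, 0, 1) \<in> L \<inter> UU" using True \<open>cc = 0\<close> unfolding L
      by (simp add: mem_U_aff ff_def)
    moreover have "pt (0, 1, 0) \<noteq> pt (0, 0, (1::'a))" by simp
    ultimately show ?thesis using LU by auto
  next
    case False
    define m where "m = - a / b"
    obtain c where pc: "phi c = m" using phi_surj by blast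
    have cc: "cc = - b * eps" using Rb by (metis add.commute eq_neg_iff_add_eq_0 mult_minus_left)
    have inL: "pt (x, y, 1) \<in> L \<longleftrightarrow> y = m * x + eps" for x y
    proof -
      have "b * (y - (m * x + eps)) = a * x + b * y + cc" unfolding m_def cc using False
        by (simp add: field_simps)
      then show ?thesis unfolding L mem_line_aff using False by (metis eq_iff_diff_eq_0 mult_eq_0_iff)
    qed
    have "Q \<in> UU" "Q \<in> L" using LU by auto
    then obtain x y where Q: "Q = pt (x, y, 1)" "cj (y - ff x) = y - ff x"
    proof (cases rule: U_cases)
      case 1 then show ?thesis using \<open>Q \<in> L\<close> False unfolding L by simp
    qed auto
    have y: "y = m * x + eps" using Q \<open>Q \<in> L\<close> inL by simp
    have hx: "Qf (x - c) = Qf c - 2 * eps" using Q(2) h_iff[of c x] unfolding pc y by simp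
    define v where "v = x - c"
    have "Qf ((c - v) - c) = Qf c - 2 * eps" using hx Qf_minus[of "x - c"] unfolding v_def by simp
    then have "cj (m * (c - v) + eps - ff (c - v)) = m * (c - v) + eps - ff (c - v)"
      using h_iff[of c "c - v"] unfolding pc by simp
    then have "pt (c - v, m * (c - v) + eps, 1) \<in> L \<inter> UU" using inL mem_U_aff by simp
    then have "pt (c - v, m * (c - v) + eps, 1) = Q" using LU by auto
    then have "c - v = x" unfolding Q by simp
    then have "2 * v = 0" unfolding v_def by (simp add: algebra_simps)
    then have "v = 0" by simp
    then have xc: "x = c" unfolding v_def by simp
    then have "Qf c = 2 * eps" using hx by simp
    moreover have "Q = pp c" unfolding Q pp_def y xc pc[symmetric] phi_gf by simp
    ultimately show ?thesis unfolding EE_def by auto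
  qed
qed

lemma Ped_sup: "pp ` EE \<subseteq> pedal UU (pt (0, eps, 1))"
proof
  fix Q assume "Q \<in> pp ` EE"
  then obtain c where c: "Qf c = 2 * eps" and Q: "Q = pp c" unfolding EE_def by auto
  define m where "m = phi c"
  define L where "L = line_of (- m, 1, - eps)"
  have inL: "pt (x, y, 1) \<in> L \<longleftrightarrow> y = m * x + eps" for x y
    unfolding L_def mem_line_aff by (auto simp: algebra_simps)
  have LU: "L \<inter> UU = {Q}"
  proof
    show "L \<inter> UU \<subseteq> {Q}"
    proof
      fix P assume P: "P \<in> L \<inter> UU"
      then have "P \<in> UU" by simp
      then show "P \<in> {Q}"
      proof (cases rule: U_cases)
        case 1 then show ?thesis using P unfolding L_def by simp
      next
        case (2 x y)
        have y: "y = m * x + eps" using P 2 inL by simp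
        have "Qf (x - c) = 0" using 2(2) h_iff[of c x] c unfolding m_def[symmetric] y by simp
        then have "x = c" using aniso[of "x - c"] by simp
        then show ?thesis unfolding 2 Q pp_def y m_def by (simp add: phi_gf)
      qed
    qed
    have "Q \<in> L" unfolding Q pp_def using inL phi_gf unfolding m_def by simp
    moreover have "Q \<in> UU"
    proof -
      have "cj (m * c + eps - ff c) = m * c + eps - ff c" using h_iff[of c c] c unfolding m_def by simp
      then show ?thesis unfolding Q pp_def mem_U_aff using phi_gf unfolding m_def by simp
    qed
    ultimately show "{Q} \<subseteq> L \<inter> UU" by simp
  qed
  have "L \<in> pg_lines" unfolding L_def pg_lines_def by (rule CollectI, rule exI[of _ "(- m, 1, - eps)"]) simp
  then have "tangent_line UU L" unfolding tangent_line_def LU by simp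
  moreover have "pt (0, eps, 1) \<in> L" unfolding L_def by simp
  ultimately show "Q \<in> pedal UU (pt (0, eps, 1))" unfolding pedal_def using LU by auto
qed

lemma Ped_eq: "pedal UU (pt (0, eps, 1)) = pp ` EE"
  using Ped_sub Ped_sup by blast

end

lemma card_le2:
  assumes "finite T" "\<And>x y z. x \<in> T \<Longrightarrow> y \<in> T \<Longrightarrow> z \<in> T \<Longrightarrow> x \<noteq> y \<Longrightarrow> x \<noteq> z \<Longrightarrow> y \<noteq> z \<Longrightarrow> False"
  shows "card T \<le> 2"
proof (rule ccontr)
  assume "\<not> card T \<le> 2"
  then have "card T \<ge> 3" by simp
  then obtain x where x: "x \<in> T" by (metis card.empty ex_in_conv not_numeral_le_zero)
  have "card (T - {x}) \<ge> 2" using \<open>card T \<ge> 3\<close> x assms(1) by (simp add: card_Diff_singleton)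
  then obtain y where y: "y \<in> T - {x}" by (metis card.empty ex_in_conv not_numeral_le_zero)
  have "card (T - {x} - {y}) \<ge> 1" using \<open>card (T - {x}) \<ge> 2\<close> y assms(1) by (simp add: card_Diff_singleton)
  then obtain z where z: "z \<in> T - {x} - {y}" by (metis card.empty ex_in_conv not_one_le_zero)
  show False using assms(2)[of x y z] x y z by auto
qed

context US
begin

lemma pp_inj: "inj pp" unfolding pp_def by (rule injI) simp

lemma pp_in_line: "pp c \<in> line_of (a, b, cc) \<longleftrightarrow> a * c + b * (gf c + eps) + cc = 0"
  unfolding pp_def by simp

lemma Qf_lin:
  assumes "cj l = l"
  shows "Qf (x + l * u) = Qf x + l * (Qf (x + u) - Qf x - Qf u) + l ^ 2 * Qf u"
  unfolding Qf_def using assms by (simp add: algebra_simps power2_eq_square)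

lemma not_thru:
  assumes a: "a \<noteq> 0"
  shows "card (line_of (a, b, cc) \<inter> pp ` EE) \<le> 2"
proof -
  define T where "T = {c \<in> EE. pp c \<in> line_of (a, b, cc)}"
  have "line_of (a, b, cc) \<inter> pp ` EE \<subseteq> pp ` T" unfolding T_def by auto
  then have "card (line_of (a, b, cc) \<inter> pp ` EE) \<le> card (pp ` T)" by (intro card_mono) auto
  also have "\<dots> \<le> card T" by (rule card_image_le) simp
  also have "card T \<le> 2"
  proof (rule card_le2)
    show "finite T" by simp
    fix c1 c2 c3 assume c: "c1 \<in> T" "c2 \<in> T" "c3 \<in> T" and d: "c1 \<noteq> c2" "c1 \<noteq> c3" "c2 \<noteq> c3"
    have Q: "Qf c = 2 * eps" and l: "a * c + b * (gf c + eps) + cc = 0" if "c \<in> T" for c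
      using that unfolding T_def EE_def pp_in_line by auto
    show False
    proof (cases "b = 0")
      case True
      then have "c = - cc / a" if "c \<in> T" for c using l[OF that] a by (simp add: field_simps eq_neg_iff_add_eq_0)
      then show False using c d by metis
    next
      case False
      define m where "m = - a / b"
      define k0 where "k0 = - cc / b"
      have m0: "m \<noteq> 0" unfolding m_def using a False by simp
      have y: "gf c + eps = m * c + k0" if "c \<in> T" for c
        using l[OF that] False unfolding m_def k0_def by (simp add: field_simps) (metis add.commute eq_neg_iff_add_eq_0)
      have lin: "cj (m * c) - m * c = 2 * eps - cj k0 + k0" if "c \<in> T" for c
      proof -
        have "cj (gf c + eps) - (gf c + eps) = 2 * eps" using y_id[of c] Q[OF that] by simp
        then show ?thesis unfolding y[OF that] by (simp add: algebra_simps)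
      qed
      define u where "u = inverse m"
      have u0: "u \<noteq> 0" unfolding u_def using m0 by simp
      have key: "(Qf (c1 + u) - Qf c1 - Qf u) + m * (c - c1) * Qf u = 0" if "c \<in> T" "c \<noteq> c1" for c
      proof -
        define l where "l = m * (c - c1)"
        have e: "cj (m * c) - m * c = cj (m * c1) - m * c1" using lin[OF that(1)] lin[OF c(1)] by simp
        have "cj l = cj (m * c) - cj (m * c1)" unfolding l_def by (simp add: algebra_simps)
        also have "\<dots> = l" using e unfolding l_def by algebra
        finally have cl: "cj l = l" .
        have cc1: "c = c1 + l * u" unfolding l_def u_def using m0 by (simp add: field_simps)
        have "Qf c = Qf c1 + l * (Qf (c1 + u) - Qf c1 - Qf u) + l ^ 2 * Qf u" unfolding cc1 by (rule Qf_lin[OF cl])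
        then have "l * ((Qf (c1 + u) - Qf c1 - Qf u) + l * Qf u) = 0" using Q[OF that(1)] Q[OF c(1)]
          by (simp add: algebra_simps power2_eq_square)
        moreover have "l \<noteq> 0" unfolding l_def using m0 that by simp
        ultimately show ?thesis unfolding l_def by simp
      qed
      have "m * (c2 - c1) * Qf u = m * (c3 - c1) * Qf u" using key[OF c(2)] key[OF c(3)] d by (metis add_left_cancel)
      then have "(m * (c2 - c3)) * Qf u = 0" by (simp add: algebra_simps)
      then have "Qf u = 0" using m0 d by simp
      then show False using aniso u0 by blast
    qed
  qed
  finally show ?thesis .
qed

end

context US
begin

definition "cnt k = card {c \<in> EE. gf c + eps = k}"
definition "pB = [: 16 * dl ^ 2 * eps ^ 2 - 12 * DD * eps ^ 2, 8 * DD * eps, 4 * DD :]"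

lemma cnt_set: "{c \<in> EE. gf c + eps = k} = (if cj k - k = 2 * eps then {c. gf c = k - eps} else {})"
proof -
  have "Qf c = 2 * eps \<longleftrightarrow> cj k - k = 2 * eps" if "gf c + eps = k" for c
  proof -
    have e: "cj k - k - 2 * eps = 2 * (Qf c - 2 * eps)" using y_id[of c] unfolding that[symmetric] by (simp add: algebra_simps)
    have "Qf c = 2 * eps \<longleftrightarrow> 2 * (Qf c - 2 * eps) = 0"
      by (simp only: mult_eq_0_iff two_ne0 right_minus_eq simp_thms)
    also have "\<dots> \<longleftrightarrow> cj k - k - 2 * eps = 0" unfolding e ..
    also have "\<dots> \<longleftrightarrow> cj k - k = 2 * eps" by simp
    finally show ?thesis .
  qed
  then show ?thesis unfolding EE_def by (auto simp: algebra_simps)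
qed

lemma s_ne0: "cj k - k = 2 * eps \<Longrightarrow> k - eps \<noteq> 0"
proof
  assume "cj k - k = 2 * eps" "k - eps = 0"
  then have "4 * eps = 0" by simp
  then show False by simp
qed

lemma cnt_vals:
  shows "\<not> is_square \<alpha> \<Longrightarrow> cnt k \<in> {0, 2}"
    and "is_square \<alpha> \<Longrightarrow> cnt k \<in> {0, 2, 4}"
    and "is_square \<alpha> \<Longrightarrow> cnt k = 2 \<Longrightarrow> poly pB k = 0"
proof -
  show "\<not> is_square \<alpha> \<Longrightarrow> cnt k \<in> {0, 2}"
    unfolding cnt_def cnt_set using fiber_card(1)[OF s_ne0] by auto
  show "is_square \<alpha> \<Longrightarrow> cnt k \<in> {0, 2, 4}"
    unfolding cnt_def cnt_set using fiber_card(2)[OF s_ne0] by auto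
  assume sq: "is_square \<alpha>" and c2: "cnt k = 2"
  then have ck: "cj k - k = 2 * eps" unfolding cnt_def cnt_set by (auto split: if_splits)
  then have "card {c. gf c = k - eps} = 2" using c2 unfolding cnt_def cnt_set by simp
  then have e: "4 * DD * ((k - eps) * cj (k - eps)) = - ((dl * (cj (k - eps) - (k - eps))) ^ 2)"
    using fiber_card(3)[OF s_ne0[OF ck] sq] by simp
  have cjk: "cj k = k + 2 * eps" using ck by (simp add: algebra_simps)
  have "cj (k - eps) = k + 3 * eps" using cjk by simp
  then have "4 * DD * ((k - eps) * (k + 3 * eps)) = - ((dl * (4 * eps)) ^ 2)" using e by (simp add: add.commute)
  then show "poly pB k = 0" unfolding pB_def by (simp add: algebra_simps power2_eq_square)
qed

lemma card_pB: "card {k. poly pB k = 0} \<le> 2"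
proof -
  have "coeff pB 2 = 4 * DD" unfolding pB_def by (simp add: numeral_2_eq_2)
  then have "pB \<noteq> 0" by auto
  moreover have "degree pB \<le> 2" unfolding pB_def by (simp add: degree_pCons_le)
  ultimately show ?thesis using card_poly_roots_bound[of pB] by simp
qed

lemma line_k: "card (line_of (0, 1, - k) \<inter> pp ` EE) = cnt k"
proof -
  have "line_of (0, 1, - k) \<inter> pp ` EE = pp ` {c \<in> EE. gf c + eps = k}"
    using pp_in_line by auto
  then show ?thesis unfolding cnt_def using card_image[OF inj_on_subset[OF pp_inj]] by simp
qed

lemma thru_cases:
  assumes "(0, b, cc) \<noteq> (0, 0, (0::'a))"
  shows "card (line_of (0, b, cc) \<inter> pp ` EE) = 0 \<or> (\<exists>k. card (line_of (0, b, cc) \<inter> pp ` EE) = cnt k)"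
proof (cases "b = 0")
  case True
  then have "cc \<noteq> 0" using assms by simp
  then have "line_of (0, b, cc) \<inter> pp ` EE = {}" using True pp_in_line by auto
  then show ?thesis by simp
next
  case False
  have "line_of (0, b, cc) \<inter> pp ` EE = pp ` {c \<in> EE. gf c + eps = - cc / b}"
    using pp_in_line False by (auto simp: field_simps eq_neg_iff_add_eq_0)
  then show ?thesis unfolding cnt_def using card_image[OF inj_on_subset[OF pp_inj]] by auto
qed

lemma sum_if_const: "(\<Sum>k\<in>(UNIV::'a set). if P k then (c::nat) else 0) = c * card {k. P k}"
  by (simp add: sum.If_cases)

lemma count4:
  assumes sq: "is_square \<alpha>"
  shows "q + 1 \<le> 4 * card {k. cnt k = 4} + 4"
proof -
  have "q + 1 = card EE" using card_E unfolding EE_def by simp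
  also have "\<dots> = (\<Sum>k\<in>UNIV. cnt k)" unfolding cnt_def by (rule card_fibers) auto
  also have "\<dots> \<le> (\<Sum>k\<in>UNIV. (if cnt k = 4 then 4 else 0) + (if poly pB k = 0 then 2 else 0))"
  proof (rule sum_mono)
    fix k
    show "cnt k \<le> (if cnt k = 4 then 4 else 0) + (if poly pB k = 0 then 2 else 0)"
      using cnt_vals(2)[OF sq, of k] cnt_vals(3)[OF sq, of k] by auto
  qed
  also have "\<dots> = 4 * card {k. cnt k = 4} + 2 * card {k. poly pB k = 0}"
    by (simp only: sum.distrib sum_if_const)
  also have "\<dots> \<le> 4 * card {k. cnt k = 4} + 4" using card_pB by simp
  finally show ?thesis .
qed

lemma lines4:
  assumes sq: "is_square \<alpha>"
  shows "card {k. cnt k = 4} \<le> card {L \<in> pg_lines. card (L \<inter> pp ` EE) = 4}"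
proof (rule card_inj_on_le)
  show "inj_on (\<lambda>k. line_of (0, 1, - k)) {k. cnt k = 4}"
  proof (rule inj_onI)
    fix k k' assume "line_of (0, 1, - k) = line_of (0, 1, - k')"
    moreover have "pt (0, k, 1) \<in> line_of (0, 1, - k)" by simp
    ultimately have "pt (0, k, 1) \<in> line_of (0, 1, - k')" by simp
    then show "k = k'" by simp
  qed
  show "(\<lambda>k. line_of (0, 1, - k)) ` {k. cnt k = 4} \<subseteq> {L \<in> pg_lines. card (L \<inter> pp ` EE) = 4}"
  proof clarify
    fix k assume "cnt k = 4"
    moreover have "line_of (0, 1, - k) \<in> pg_lines" unfolding pg_lines_def
      by (rule CollectI, rule exI[of _ "(0, 1, - k)"]) simp
    ultimately show "line_of (0, 1, - k) \<in> pg_lines \<and> card (line_of (0, 1, - k) \<inter> pp ` EE) = 4"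
      using line_k by simp
  qed
  show "finite {L \<in> pg_lines. card (L \<inter> pp ` EE) = 4}" by (rule finite)
qed

lemma main:
  "(\<not> is_square \<alpha> \<longrightarrow>
        (\<forall>L \<in> pg_lines. pt (1, 0, 0) \<in> L \<longrightarrow> card (L \<inter> pp ` EE) \<in> {0, 2}))
     \<and> (is_square \<alpha> \<longrightarrow>
        (\<forall>L \<in> pg_lines. pt (1, 0, 0) \<in> L \<longrightarrow> card (L \<inter> pp ` EE) \<in> {0, 2, 4})
        \<and> (real q - 3) / 4 \<le> real (card {L \<in> pg_lines. card (L \<inter> pp ` EE) = 4})
        \<and> (\<forall>L \<in> pg_lines. card (L \<inter> pp ` EE) = 4 \<longrightarrow> pt (1, 0, 0) \<in> L))"
proof (intro conjI impI ballI)
  fix L :: "('a \<times> 'a \<times> 'a) set set" assume nsq: "\<not> is_square \<alpha>" and L: "L \<in> pg_lines" and X: "pt (1, 0, 0) \<in> L"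
  obtain a b cc where Lr: "L = line_of (a, b, cc)" "(a, b, cc) \<noteq> (0, 0, 0)" using L by (rule pg_line_cases)
  have "a = 0" using X Lr by simp
  then have "(0, b, cc) \<noteq> (0, 0, 0::'a)" using Lr by simp
  then have "card (L \<inter> pp ` EE) = 0 \<or> (\<exists>k. card (L \<inter> pp ` EE) = cnt k)"
    using thru_cases[of b cc] unfolding Lr(1) \<open>a = 0\<close> by blast
  then show "card (L \<inter> pp ` EE) \<in> {0, 2}" by (elim disjE exE) (use cnt_vals(1)[OF nsq] in auto)
next
  fix L :: "('a \<times> 'a \<times> 'a) set set" assume sq: "is_square \<alpha>" and L: "L \<in> pg_lines" and X: "pt (1, 0, 0) \<in> L"
  obtain a b cc where Lr: "L = line_of (a, b, cc)" "(a, b, cc) \<noteq> (0, 0, 0)" using L by (rule pg_line_cases)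
  have "a = 0" using X Lr by simp
  then have "(0, b, cc) \<noteq> (0, 0, 0::'a)" using Lr by simp
  then have "card (L \<inter> pp ` EE) = 0 \<or> (\<exists>k. card (L \<inter> pp ` EE) = cnt k)"
    using thru_cases[of b cc] unfolding Lr(1) \<open>a = 0\<close> by blast
  then show "card (L \<inter> pp ` EE) \<in> {0, 2, 4}" by (elim disjE exE) (use cnt_vals(2)[OF sq] in auto)
next
  assume sq: "is_square \<alpha>"
  have "q + 1 \<le> 4 * card {L \<in> pg_lines. card (L \<inter> pp ` EE) = 4} + 4"
    using count4[OF sq] lines4[OF sq] by linarith
  then have "real (q + 1) \<le> real (4 * card {L \<in> pg_lines. card (L \<inter> pp ` EE) = 4} + 4)"
    by (simp only: of_nat_le_iff)
  then show "(real q - 3) / 4 \<le> real (card {L \<in> pg_lines. card (L \<inter> pp ` EE) = 4})"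
    by simp
next
  fix L :: "('a \<times> 'a \<times> 'a) set set" assume L: "L \<in> pg_lines" and c4: "card (L \<inter> pp ` EE) = 4"
  obtain a b cc where Lr: "L = line_of (a, b, cc)" "(a, b, cc) \<noteq> (0, 0, 0)" using L by (rule pg_line_cases)
  show "pt (1, 0, 0) \<in> L"
  proof (rule ccontr)
    assume "pt (1, 0, 0) \<notin> L"
    then have "a \<noteq> 0" using Lr by simp
    then show False using not_thru[of a b cc] c4 Lr by simp
  qed
qed

end

theorem lemma2p3:
  fixes q :: nat and \<alpha> \<beta> \<zeta> :: "'a::{field, finite}"
  assumes card: "card (UNIV :: 'a set) = q ^ 2"
    and odd: "odd q"
    and prim: "primitive_elem \<zeta>"
    and a0: "\<alpha> \<noteq> 0"
    and ns: "nonsquare_in_Fq q ((\<beta> ^ q - \<beta>) ^ 2 + 4 * \<alpha> ^ (q + 1))"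
  defines "\<epsilon> \<equiv> \<zeta> ^ ((q + 1) div 2)"
  defines "R1 \<equiv> pt (0, \<epsilon>, 1)"
  defines "Uinf \<equiv> pt (1, 0, 0)"
  defines "Ped \<equiv> pedal (unital_ab q \<alpha> \<beta>) R1"
  shows
    "(\<not> is_square \<alpha> \<longrightarrow>
        (\<forall>L \<in> pg_lines. Uinf \<in> L \<longrightarrow> card (L \<inter> Ped) \<in> {0, 2}))
     \<and> (is_square \<alpha> \<longrightarrow>
        (\<forall>L \<in> pg_lines. Uinf \<in> L \<longrightarrow> card (L \<inter> Ped) \<in> {0, 2, 4})
        \<and> (real q - 3) / 4 \<le> real (card {L \<in> pg_lines. card (L \<inter> Ped) = 4})
        \<and> (\<forall>L \<in> pg_lines. card (L \<inter> Ped) = 4 \<longrightarrow> Uinf \<in> L))"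
proof -
  interpret US q \<alpha> \<beta> \<zeta>
    by unfold_locales (use card odd prim a0 ns in auto)
  have eq: "\<epsilon> = eps" unfolding \<epsilon>_def eps_def ..
  have P: "Ped = pp ` EE" unfolding Ped_def R1_def eq by (rule Ped_eq)
  show ?thesis using main unfolding P Uinf_def .
qed

end
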